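(* Let $A>0$ and let $g\in C(\mathbb R;\mathbb R)$ be bounded with $g>0$ on $\mathbb R$ and $\int_{\mathbb R}(1+|x|)g(x)\,dx<\infty$. Then there is $K>1$ such that for all $v,w\in\mathcal X(\mathbb R)$, $$\tfrac1K d_g(v,w)\le d_{\mathcal X}(v,w)\le Kd_A(v,w)\le K^2d_g(v,w).$$ Moreover $d_{\mathcal X}(v,w)\le d_\infty(v,w)$ for all $v,w$, but $d_{\mathcal X}$ and $d_\infty$ are not equivalent: with $\chi(x)=\max(1-|x|,0)$ and $v_n(x)=e^{i\chi(n+x/n)}$, one has $d_{\mathcal X}(v_n,1)\to0$ while $d_\infty(v_n,1)\to|e^{i}-1|\neq0$.
   Context: $r_0>0$; $\mathcal X(\mathbb R)=\{v\in H^1_{loc}(\mathbb R;\mathbb C):v'\in L^2,|v|^2-r_0^2\in L^2\}$. For $v,w\in\mathcal X(\mathbb R)$ and writing $\Delta(v,w)=\int|v'-w'|^2dx+\int(|v|-|w|)^2dx$: $d_{\mathcal X}(v,w)^2=\Delta+|v(0)-w(0)|^2$; $d_\infty(v,w)^2=\Delta+\sup_{\mathbb R}|v-w|^2$; $d_A(v,w)^2=\Delta+\sup_{[-A,A]}|v-w|^2$; $d_g(v,w)^2=\Delta+\int g|v-w|^2dx$. (In the counterexample take $r_0=1$.) *)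

theory Defs
  imports "HOL-Analysis.Analysis"
begin

text \<open>H^1_loc on the real line: represented by the (absolutely) continuous representative
  v together with a locally integrable weak derivative v', i.e. v b - v a = int_a^b v'.\<close>
definition has_weak_deriv :: "(real \<Rightarrow> complex) \<Rightarrow> (real \<Rightarrow> complex) \<Rightarrow> bool" where
  "has_weak_deriv v v' \<longleftrightarrow>
     (\<forall>a b. a \<le> b \<longrightarrow> set_integrable lborel {a..b} v' \<and>
        v b - v a = (LINT x:{a..b}|lborel. v' x))"

definition XR :: "real \<Rightarrow> (real \<Rightarrow> complex) set" where
  "XR r0 = {v. \<exists>v'. has_weak_deriv v v' \<and> v' \<in> borel_measurable lborel \<and>
        integrable lborel (\<lambda>x. (cmod (v' x))\<^sup>2) \<and>
        integrable lborel (\<lambda>x. ((cmod (v x))\<^sup>2 - r0\<^sup>2)\<^sup>2)}"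

text \<open>The weak derivative (unique up to null sets, which does not affect the integrals below).\<close>
definition wderiv :: "(real \<Rightarrow> complex) \<Rightarrow> real \<Rightarrow> complex" where
  "wderiv v = (SOME v'. has_weak_deriv v v' \<and> v' \<in> borel_measurable lborel \<and>
        integrable lborel (\<lambda>x. (cmod (v' x))\<^sup>2))"

definition Delta :: "(real \<Rightarrow> complex) \<Rightarrow> (real \<Rightarrow> complex) \<Rightarrow> real" where
  "Delta v w = (LINT x|lborel. (cmod (wderiv v x - wderiv w x))\<^sup>2)
             + (LINT x|lborel. (cmod (v x) - cmod (w x))\<^sup>2)"

definition dX :: "(real \<Rightarrow> complex) \<Rightarrow> (real \<Rightarrow> complex) \<Rightarrow> real" where
  "dX v w = sqrt (Delta v w + (cmod (v 0 - w 0))\<^sup>2)"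

definition dinf :: "(real \<Rightarrow> complex) \<Rightarrow> (real \<Rightarrow> complex) \<Rightarrow> real" where
  "dinf v w = sqrt (Delta v w + (SUP x. (cmod (v x - w x))\<^sup>2))"

definition dA :: "real \<Rightarrow> (real \<Rightarrow> complex) \<Rightarrow> (real \<Rightarrow> complex) \<Rightarrow> real" where
  "dA A v w = sqrt (Delta v w + (SUP x\<in>{-A..A}. (cmod (v x - w x))\<^sup>2))"

definition dg :: "(real \<Rightarrow> real) \<Rightarrow> (real \<Rightarrow> complex) \<Rightarrow> (real \<Rightarrow> complex) \<Rightarrow> real" where
  "dg g v w = sqrt (Delta v w + (LINT x|lborel. g x * (cmod (v x - w x))\<^sup>2))"

definition chi :: "real \<Rightarrow> real" where
  "chi x = max (1 - \<bar>x\<bar>) 0"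

end

theory Submission
  imports Defs
begin


lemma cs_real:
  fixes f g :: "'a \<Rightarrow> real"
  assumes f[measurable]: "f \<in> borel_measurable M" and g[measurable]: "g \<in> borel_measurable M"
    and fi: "integrable M (\<lambda>x. (f x)\<^sup>2)" and gi: "integrable M (\<lambda>x. (g x)\<^sup>2)"
  shows "integrable M (\<lambda>x. \<bar>f x * g x\<bar>)"
    and "(LINT x|M. \<bar>f x * g x\<bar>)\<^sup>2 \<le> (LINT x|M. (f x)\<^sup>2) * (LINT x|M. (g x)\<^sup>2)"
proof -
  have b: "\<bar>f x * g x\<bar> \<le> ((f x)\<^sup>2 + (g x)\<^sup>2)/2" for x
  proof -
    have "0 \<le> (\<bar>f x\<bar> - \<bar>g x\<bar>)\<^sup>2" by simp
    then show ?thesis by (simp add: power2_eq_square abs_mult algebra_simps)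
  qed
  show fgi: "integrable M (\<lambda>x. \<bar>f x * g x\<bar>)"
    by (rule Bochner_Integration.integrable_bound[of _ "\<lambda>x. ((f x)\<^sup>2 + (g x)\<^sup>2)/2"])
       (use fi gi b in auto)
  have "(\<integral>\<^sup>+x. ennreal \<bar>f x\<bar> * ennreal \<bar>g x\<bar> \<partial>M)\<^sup>2 \<le> (\<integral>\<^sup>+x. (ennreal \<bar>f x\<bar>) ^ 2 \<partial>M) * (\<integral>\<^sup>+x. (ennreal \<bar>g x\<bar>) ^ 2 \<partial>M)"
    by (rule Cauchy_Schwarz_nn_integral) auto
  also have "(\<lambda>x. ennreal \<bar>f x\<bar> * ennreal \<bar>g x\<bar>) = (\<lambda>x. ennreal \<bar>f x * g x\<bar>)"
    by (auto simp: ennreal_mult' abs_mult)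
  also have "(\<lambda>x. (ennreal \<bar>f x\<bar>) ^ 2) = (\<lambda>x. ennreal ((f x)\<^sup>2))"
    by (auto simp: ennreal_power)
  also have "(\<lambda>x. (ennreal \<bar>g x\<bar>) ^ 2) = (\<lambda>x. ennreal ((g x)\<^sup>2))"
    by (auto simp: ennreal_power)
  also have "(\<integral>\<^sup>+x. ennreal \<bar>f x * g x\<bar> \<partial>M) = ennreal (LINT x|M. \<bar>f x * g x\<bar>)"
    by (rule nn_integral_eq_integral[OF fgi]) auto
  also have "(\<integral>\<^sup>+x. ennreal ((f x)\<^sup>2) \<partial>M) = ennreal (LINT x|M. (f x)\<^sup>2)"
    by (rule nn_integral_eq_integral[OF fi]) auto
  also have "(\<integral>\<^sup>+x. ennreal ((g x)\<^sup>2) \<partial>M) = ennreal (LINT x|M. (g x)\<^sup>2)"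
    by (rule nn_integral_eq_integral[OF gi]) auto
  finally have "ennreal ((LINT x|M. \<bar>f x * g x\<bar>)\<^sup>2) \<le> ennreal ((LINT x|M. (f x)\<^sup>2) * (LINT x|M. (g x)\<^sup>2))"
    by (simp add: ennreal_power ennreal_mult' integral_nonneg_AE)
  then show "(LINT x|M. \<bar>f x * g x\<bar>)\<^sup>2 \<le> (LINT x|M. (f x)\<^sup>2) * (LINT x|M. (g x)\<^sup>2)"
    by (subst (asm) ennreal_le_iff) (auto intro!: mult_nonneg_nonneg integral_nonneg_AE)
qed



lemma wd_some:
  assumes "v \<in> XR r0"
  shows "has_weak_deriv v (wderiv v)" "wderiv v \<in> borel_measurable lborel"
    "integrable lborel (\<lambda>x. (cmod (wderiv v x))\<^sup>2)"
proof -
  from assms obtain v' where "has_weak_deriv v v' \<and> v' \<in> borel_measurable lborel \<and>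
        integrable lborel (\<lambda>x. (cmod (v' x))\<^sup>2)" unfolding XR_def by blast
  then have "\<exists>v'. has_weak_deriv v v' \<and> v' \<in> borel_measurable lborel \<and>
        integrable lborel (\<lambda>x. (cmod (v' x))\<^sup>2)" by blast
  from someI_ex[OF this] have "has_weak_deriv v (wderiv v) \<and> wderiv v \<in> borel_measurable lborel \<and>
        integrable lborel (\<lambda>x. (cmod (wderiv v x))\<^sup>2)"
    unfolding wderiv_def by simp
  then show "has_weak_deriv v (wderiv v)" "wderiv v \<in> borel_measurable lborel"
    "integrable lborel (\<lambda>x. (cmod (wderiv v x))\<^sup>2)" by auto
qed

lemma wd_diff:
  assumes "has_weak_deriv v v'" "has_weak_deriv w w'"
  shows "has_weak_deriv (\<lambda>x. v x - w x) (\<lambda>x. v' x - w' x)"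
  unfolding has_weak_deriv_def
proof (intro allI impI conjI)
  fix a b :: real assume "a \<le> b"
  then have v: "set_integrable lborel {a..b} v'" "v b - v a = (LINT x:{a..b}|lborel. v' x)"
   and w: "set_integrable lborel {a..b} w'" "w b - w a = (LINT x:{a..b}|lborel. w' x)"
    using assms unfolding has_weak_deriv_def by auto
  show "set_integrable lborel {a..b} (\<lambda>x. v' x - w' x)"
    by (rule set_integral_diff(1)[OF v(1) w(1)])
  show "v b - w b - (v a - w a) = (LINT x:{a..b}|lborel. v' x - w' x)"
    unfolding set_integral_diff(2)[OF v(1) w(1)] v(2)[symmetric] w(2)[symmetric] by simp
qed

lemma sq_integrable_diff:
  fixes v' w' :: "real \<Rightarrow> complex"
  assumes [measurable]: "v' \<in> borel_measurable lborel" "w' \<in> borel_measurable lborel"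
    and "integrable lborel (\<lambda>x. (cmod (v' x))\<^sup>2)" "integrable lborel (\<lambda>x. (cmod (w' x))\<^sup>2)"
  shows "integrable lborel (\<lambda>x. (cmod (v' x - w' x))\<^sup>2)"
proof (rule Bochner_Integration.integrable_bound[of _ "\<lambda>x. 2 * (cmod (v' x))\<^sup>2 + 2 * (cmod (w' x))\<^sup>2"])
  show "integrable lborel (\<lambda>x. 2 * (cmod (v' x))\<^sup>2 + 2 * (cmod (w' x))\<^sup>2)"
    using assms by auto
  show "(\<lambda>x. (cmod (v' x - w' x))\<^sup>2) \<in> borel_measurable lborel" by measurable
  show "AE x in lborel. norm ((cmod (v' x - w' x))\<^sup>2) \<le> norm (2 * (cmod (v' x))\<^sup>2 + 2 * (cmod (w' x))\<^sup>2)"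
  proof (rule AE_I2)
    fix x
    have t: "cmod (v' x - w' x) \<le> cmod (v' x) + cmod (w' x)" by (rule norm_triangle_ineq4)
    have "(cmod (v' x - w' x))\<^sup>2 \<le> (cmod (v' x) + cmod (w' x))\<^sup>2"
      using t by (intro power_mono) auto
    also have "\<dots> \<le> 2 * (cmod (v' x))\<^sup>2 + 2 * (cmod (w' x))\<^sup>2"
    proof -
      have "0 \<le> (cmod (v' x) - cmod (w' x))\<^sup>2" by simp
      then show ?thesis by (simp add: power2_eq_square algebra_simps)
    qed
    finally show "norm ((cmod (v' x - w' x))\<^sup>2) \<le> norm (2 * (cmod (v' x))\<^sup>2 + 2 * (cmod (w' x))\<^sup>2)"
      by simp
  qed
qed

lemma holder:
  assumes u: "has_weak_deriv u d" and [measurable]: "d \<in> borel_measurable lborel"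
    and di: "integrable lborel (\<lambda>t. (cmod (d t))\<^sup>2)" and xy: "x \<le> y"
  shows "(cmod (u y - u x))\<^sup>2 \<le> (y - x) * (LINT t|lborel. (cmod (d t))\<^sup>2)"
proof -
  have si: "set_integrable lborel {x..y} d" and eq: "u y - u x = (LINT t:{x..y}|lborel. d t)"
    using u xy unfolding has_weak_deriv_def by auto
  have n1: "cmod (u y - u x) \<le> (LINT t:{x..y}|lborel. cmod (d t))"
    unfolding eq by (rule set_integral_norm_bound[OF si])
  define f where "f t = indicator {x..y} t * cmod (d t)" for t
  define g :: "real \<Rightarrow> real" where "g t = indicator {x..y} t" for t
  have [measurable]: "f \<in> borel_measurable lborel" "g \<in> borel_measurable lborel"
    unfolding f_def g_def by measurable
  have f2: "(\<lambda>t. (f t)\<^sup>2) = (\<lambda>t. indicator {x..y} t * (cmod (d t))\<^sup>2)"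
    by (auto simp: f_def indicator_def power2_eq_square)
  have g2: "(\<lambda>t. (g t)\<^sup>2) = indicator {x..y}"
    by (auto simp: g_def indicator_def power2_eq_square)
  have ii: "integrable lborel (\<lambda>t. indicator {x..y} t * (cmod (d t))\<^sup>2)"
    using integrable_mult_indicator[OF _ di, of "{x..y}"] by simp
  have fi: "integrable lborel (\<lambda>t. (f t)\<^sup>2)"
    unfolding f2 by (rule ii)
  have gi: "integrable lborel (\<lambda>t. (g t)\<^sup>2)"
    unfolding g2 by (simp add: integrable_indicator_iff emeasure_lborel_Icc_eq)
  have fg: "(\<lambda>t. \<bar>f t * g t\<bar>) = (\<lambda>t. indicator {x..y} t * cmod (d t))"
    by (auto simp: f_def g_def indicator_def)
  have "(LINT t:{x..y}|lborel. cmod (d t)) = (LINT t|lborel. \<bar>f t * g t\<bar>)"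
    unfolding fg set_lebesgue_integral_def by simp
  then have "(LINT t:{x..y}|lborel. cmod (d t))\<^sup>2 \<le> (LINT t|lborel. (f t)\<^sup>2) * (LINT t|lborel. (g t)\<^sup>2)"
    using cs_real(2)[OF _ _ fi gi] by simp
  also have "(LINT t|lborel. (g t)\<^sup>2) = y - x"
    unfolding g2 using xy by simp
  also have "(LINT t|lborel. (f t)\<^sup>2) \<le> (LINT t|lborel. (cmod (d t))\<^sup>2)"
    unfolding f2 by (rule Bochner_Integration.integral_mono[OF ii di]) (auto simp: indicator_def)
  finally have "(LINT t:{x..y}|lborel. cmod (d t))\<^sup>2 \<le> (LINT t|lborel. (cmod (d t))\<^sup>2) * (y - x)"
    using xy by (simp add: mult_right_mono)
  moreover have "(cmod (u y - u x))\<^sup>2 \<le> (LINT t:{x..y}|lborel. cmod (d t))\<^sup>2"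
    using n1 by (intro power_mono) auto
  ultimately show ?thesis by (simp add: mult.commute)
qed



lemma holder_abs:
  assumes u: "has_weak_deriv u d" and [measurable]: "d \<in> borel_measurable lborel"
    and di: "integrable lborel (\<lambda>t. (cmod (d t))\<^sup>2)"
  shows "(cmod (u y - u x))\<^sup>2 \<le> \<bar>y - x\<bar> * (LINT t|lborel. (cmod (d t))\<^sup>2)"
proof (cases "x \<le> y")
  case True
  then show ?thesis using holder[OF assms True] by simp
next
  case False
  then have "(cmod (u x - u y))\<^sup>2 \<le> (x - y) * (LINT t|lborel. (cmod (d t))\<^sup>2)"
    using holder[OF assms, of y x] by simp
  then show ?thesis using False by (simp add: norm_minus_commute)
qed

lemma weak_cont:
  assumes u: "has_weak_deriv u d" and [measurable]: "d \<in> borel_measurable lborel"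
    and di: "integrable lborel (\<lambda>t. (cmod (d t))\<^sup>2)"
  shows "continuous_on UNIV u"
proof -
  define S where "S = (LINT t|lborel. (cmod (d t))\<^sup>2)"
  have S0: "0 \<le> S" unfolding S_def by (rule integral_nonneg_AE) auto
  have "isCont u x" for x
  proof -
    have b: "norm (u y - u x) \<le> sqrt (\<bar>y - x\<bar> * S)" for y
      using holder_abs[OF assms, of y x] unfolding S_def[symmetric]
      by (simp add: real_le_rsqrt)
    have "((\<lambda>y. sqrt (\<bar>y - x\<bar> * S)) \<longlongrightarrow> sqrt (\<bar>x - x\<bar> * S)) (at x)"
      by (intro tendsto_intros)
    then have l: "((\<lambda>y. sqrt (\<bar>y - x\<bar> * S)) \<longlongrightarrow> 0) (at x)" by simp
    have "((\<lambda>y. u y - u x) \<longlongrightarrow> 0) (at x)"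
      by (rule Lim_null_comparison[OF _ l]) (use b in auto)
    then show ?thesis unfolding isCont_def by (simp add: LIM_zero_iff)
  qed
  then show ?thesis by (simp add: continuous_at_imp_continuous_on)
qed

lemma XR_bounded:
  assumes v: "v \<in> XR r0"
  shows "\<exists>B. \<forall>x. cmod (v x) \<le> B"
proof -
  note W = wd_some[OF v]
  note [measurable] = W(2)
  define S where "S = (LINT t|lborel. (cmod (wderiv v t))\<^sup>2)"
  define h where "h t = ((cmod (v t))\<^sup>2 - r0\<^sup>2)\<^sup>2" for t
  have hi: "integrable lborel h"
    using v unfolding XR_def h_def by auto
  define I where "I = (LINT t|lborel. h t)"
  have S0: "0 \<le> S" unfolding S_def by (rule integral_nonneg_AE) auto
  have I0: "0 \<le> I" unfolding I_def h_def by (rule integral_nonneg_AE) auto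
  have vc: "continuous_on UNIV v" by (rule weak_cont[OF W])
  then have [measurable]: "v \<in> borel_measurable lborel"
    using borel_measurable_continuous_onI by simp
  have [measurable]: "h \<in> borel_measurable lborel" unfolding h_def by measurable
  have "cmod (v x) \<le> sqrt S + \<bar>r0\<bar> + 1 + sqrt I" for x
  proof (rule ccontr)
    assume "\<not> ?thesis"
    then have M: "cmod (v x) > sqrt S + \<bar>r0\<bar> + 1 + sqrt I" by simp
    define c where "c = cmod (v x) - sqrt S"
    have c: "c > \<bar>r0\<bar> + 1 + sqrt I" using M unfolding c_def by simp
    have low: "h y \<ge> 1 + I" if y: "y \<in> {x..x+1}" for y
    proof -
      have "(cmod (v y - v x))\<^sup>2 \<le> \<bar>y - x\<bar> * S"
        using holder_abs[OF W, of y x] unfolding S_def by simp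
      also have "\<dots> \<le> 1 * S" using y S0 by (intro mult_right_mono) auto
      finally have "cmod (v y - v x) \<le> sqrt S" by (simp add: real_le_rsqrt)
      moreover have "cmod (v x) \<le> cmod (v y) + cmod (v y - v x)"
        by (metis norm_minus_commute norm_triangle_sub)
      ultimately have vy: "cmod (v y) \<ge> c" unfolding c_def by simp
      have c0: "c \<ge> 0" using c real_sqrt_ge_zero[OF I0] abs_ge_zero[of r0] by linarith
      have "(cmod (v y))\<^sup>2 \<ge> c\<^sup>2" using vy c0 by (intro power_mono) auto
      then have "(cmod (v y))\<^sup>2 - r0\<^sup>2 \<ge> c\<^sup>2 - r0\<^sup>2" by simp
      moreover have "c\<^sup>2 - r0\<^sup>2 \<ge> 1 + sqrt I"
      proof -
        have "c\<^sup>2 - r0\<^sup>2 = (c - \<bar>r0\<bar>) * (c + \<bar>r0\<bar>)" by (simp add: power2_eq_square algebra_simps)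
        also have "\<dots> \<ge> (c - \<bar>r0\<bar>) * 1"
          using c real_sqrt_ge_zero[OF I0] abs_ge_zero[of r0] by (intro mult_left_mono) linarith+
        finally show ?thesis using c by simp
      qed
      ultimately have p: "(cmod (v y))\<^sup>2 - r0\<^sup>2 \<ge> 1 + sqrt I" by simp
      have "(1 + sqrt I)\<^sup>2 \<le> ((cmod (v y))\<^sup>2 - r0\<^sup>2)\<^sup>2"
        using p real_sqrt_ge_zero[OF I0] by (intro power_mono) auto
      moreover have "(1 + sqrt I)\<^sup>2 \<ge> 1 + I"
        using I0 by (simp add: power2_eq_square algebra_simps)
      ultimately show ?thesis unfolding h_def by simp
    qed
    have ii: "integrable lborel (\<lambda>t. indicator {x..x+1} t * h t)"
      using integrable_mult_indicator[OF _ hi, of "{x..x+1}"] by simp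
    have "integrable lborel (indicator {x..x+1} :: real \<Rightarrow> real)"
      by (simp add: integrable_indicator_iff emeasure_lborel_Icc_eq)
    then have ci: "integrable lborel (\<lambda>t. indicator {x..x+1} t * (1 + I))"
      by (rule integrable_mult_left)
    have "(LINT t|lborel. indicator {x..x+1} t * (1 + I)) \<le> (LINT t|lborel. indicator {x..x+1} t * h t)"
      by (rule Bochner_Integration.integral_mono[OF ci ii])
         (use low in \<open>auto simp: indicator_def emeasure_lborel_Icc_eq\<close>)
    also have "\<dots> \<le> I" unfolding I_def
      by (rule Bochner_Integration.integral_mono[OF ii hi]) (auto simp: indicator_def h_def)
    finally have "1 + I \<le> I" by simp
    then show False by simp
  qed
  then show ?thesis by blast
qed



lemma sq_sum_le: "(p + q)\<^sup>2 \<le> 2 * p\<^sup>2 + 2 * q\<^sup>2" for p q :: real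
proof -
  have "0 \<le> (p - q)\<^sup>2" by simp
  then show ?thesis by (simp add: power2_eq_square algebra_simps)
qed

lemma pt_bound:
  assumes u: "has_weak_deriv u d" and [measurable]: "d \<in> borel_measurable lborel"
    and di: "integrable lborel (\<lambda>t. (cmod (d t))\<^sup>2)"
  shows "(cmod (u x))\<^sup>2 \<le> 2 * (cmod (u y))\<^sup>2 + 2 * \<bar>x - y\<bar> * (LINT t|lborel. (cmod (d t))\<^sup>2)"
proof -
  have "cmod (u x) \<le> cmod (u y) + cmod (u x - u y)"
    by (metis norm_triangle_sub)
  then have "(cmod (u x))\<^sup>2 \<le> (cmod (u y) + cmod (u x - u y))\<^sup>2"
    by (intro power_mono) auto
  also have "\<dots> \<le> 2 * (cmod (u y))\<^sup>2 + 2 * (cmod (u x - u y))\<^sup>2" by (rule sq_sum_le)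
  also have "(cmod (u x - u y))\<^sup>2 \<le> \<bar>x - y\<bar> * (LINT t|lborel. (cmod (d t))\<^sup>2)"
    by (rule holder_abs[OF assms])
  finally show ?thesis by simp
qed

lemma main_est:
  fixes r0 A :: real and g :: "real \<Rightarrow> real"
  assumes A: "A > 0"
    and g_cont: "continuous_on UNIV g"
    and g_pos: "\<forall>x. g x > 0"
    and g_int: "integrable lborel (\<lambda>x. (1 + \<bar>x\<bar>) * g x)"
    and m: "m > 0" "\<forall>y\<in>{-A..A}. m \<le> g y"
    and v: "v \<in> XR r0" and w: "w \<in> XR r0"
  defines "c1 \<equiv> LINT x|lborel. g x"
  defines "c2 \<equiv> LINT x|lborel. \<bar>x\<bar> * g x"
  shows "0 \<le> Delta v w \<and> 0 \<le> (cmod (v 0 - w 0))\<^sup>2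
     \<and> (cmod (v 0 - w 0))\<^sup>2 \<le> (SUP x\<in>{-A..A}. (cmod (v x - w x))\<^sup>2)
     \<and> 0 \<le> (LINT x|lborel. g x * (cmod (v x - w x))\<^sup>2)
     \<and> (LINT x|lborel. g x * (cmod (v x - w x))\<^sup>2) \<le> 2 * c1 * (cmod (v 0 - w 0))\<^sup>2 + 2 * c2 * Delta v w
     \<and> (SUP x\<in>{-A..A}. (cmod (v x - w x))\<^sup>2) \<le> (LINT x|lborel. g x * (cmod (v x - w x))\<^sup>2) / (A * m) + 2 * c1 * Delta v w / m
     \<and> (cmod (v 0 - w 0))\<^sup>2 \<le> (SUP x. (cmod (v x - w x))\<^sup>2)
     \<and> 0 \<le> c1 \<and> 0 \<le> c2"
proof -
  note V = wd_some[OF v] and W = wd_some[OF w]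
  note [measurable] = V(2) W(2)
  define u where "u x = v x - w x" for x
  define d where "d x = wderiv v x - wderiv w x" for x
  have Hu: "has_weak_deriv u d" unfolding u_def[abs_def] d_def[abs_def] by (rule wd_diff[OF V(1) W(1)])
  have dm[measurable]: "d \<in> borel_measurable lborel" unfolding d_def by measurable
  have di: "integrable lborel (\<lambda>t. (cmod (d t))\<^sup>2)"
    unfolding d_def by (rule sq_integrable_diff[OF V(2) W(2) V(3) W(3)])
  define S where "S = (LINT t|lborel. (cmod (d t))\<^sup>2)"
  define T where "T = (LINT x|lborel. (cmod (v x) - cmod (w x))\<^sup>2)"
  have S0: "0 \<le> S" unfolding S_def by (rule integral_nonneg_AE) auto
  have T0: "0 \<le> T" unfolding T_def by (rule integral_nonneg_AE) auto
  have DST: "Delta v w = S + T" unfolding Delta_def S_def T_def d_def by simp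
  have uc: "continuous_on UNIV u" by (rule weak_cont[OF Hu]) fact+
  then have [measurable]: "u \<in> borel_measurable lborel"
    using borel_measurable_continuous_onI by simp
  have [measurable]: "g \<in> borel_measurable lborel"
    using borel_measurable_continuous_onI g_cont by simp
  have gi: "integrable lborel g"
    by (rule Bochner_Integration.integrable_bound[OF g_int]) (use g_pos in \<open>auto simp: less_imp_le\<close>)
  have xgi: "integrable lborel (\<lambda>x. \<bar>x\<bar> * g x)"
    by (rule Bochner_Integration.integrable_bound[OF g_int]) (use g_pos in \<open>auto simp: less_imp_le abs_mult\<close>)
  have c10: "0 \<le> c1" unfolding c1_def by (rule integral_nonneg_AE) (use g_pos in \<open>auto simp: less_imp_le\<close>)
  have c20: "0 \<le> c2" unfolding c2_def by (rule integral_nonneg_AE) (use g_pos in \<open>auto simp: less_imp_le\<close>)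
  define a where "a = (cmod (u 0))\<^sup>2"
  have a0: "0 \<le> a" unfolding a_def by simp
  have b1: "(cmod (u x))\<^sup>2 \<le> 2 * a + 2 * \<bar>x\<bar> * S" for x
    using pt_bound[OF Hu _ di, of x 0] unfolding a_def S_def by simp
  define big where "big x = 2 * a * g x + 2 * S * (\<bar>x\<bar> * g x)" for x
  have bigi: "integrable lborel big" unfolding big_def using gi xgi by auto
  have gu_le: "g x * (cmod (u x))\<^sup>2 \<le> big x" for x
  proof -
    have "g x * (cmod (u x))\<^sup>2 \<le> g x * (2 * a + 2 * \<bar>x\<bar> * S)"
      using b1[of x] g_pos by (intro mult_left_mono) (auto simp: less_imp_le)
    then show ?thesis unfolding big_def by (simp add: algebra_simps)
  qed
  have Gi: "integrable lborel (\<lambda>x. g x * (cmod (u x))\<^sup>2)"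
    by (rule Bochner_Integration.integrable_bound[OF bigi])
       (use gu_le g_pos in \<open>auto simp: less_imp_le intro!: AE_I2 order_trans[OF gu_le abs_ge_self]\<close>)
  define G where "G = (LINT x|lborel. g x * (cmod (u x))\<^sup>2)"
  have G0: "0 \<le> G" unfolding G_def by (rule integral_nonneg_AE) (use g_pos in \<open>auto simp: less_imp_le\<close>)
  have "G \<le> (LINT x|lborel. big x)" unfolding G_def
    by (rule Bochner_Integration.integral_mono[OF Gi bigi gu_le])
  also have "(LINT x|lborel. big x) = 2 * a * c1 + 2 * S * c2"
    unfolding big_def c1_def c2_def using gi xgi by simp
  finally have G1': "G \<le> 2 * a * c1 + 2 * S * c2" .
  have "0 \<le> T * c2" using c20 T0 by simp
  then have G1: "G \<le> 2 * c1 * a + 2 * c2 * (S + T)"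
    using G1' by (simp add: algebra_simps)
  have b2: "(cmod (u x))\<^sup>2 \<le> G / (A * m) + 2 * c1 * S / m" if x: "x \<in> {-A..A}" for x
  proof -
    define U where "U = (cmod (u x))\<^sup>2"
    define big2 where "big2 y = 2 * (g y * (cmod (u y))\<^sup>2) + 4 * A * S * g y" for y
    have big2i: "integrable lborel big2" unfolding big2_def using Gi gi by auto
    have big20: "0 \<le> big2 y" for y
      unfolding big2_def using g_pos[rule_format, of y] S0 A
      by (intro add_nonneg_nonneg mult_nonneg_nonneg) auto
    have pt: "indicator {-A..A} y * (m * U) \<le> big2 y" for y
    proof (cases "y \<in> {-A..A}")
      case True
      have "m * U \<le> g y * U" using m True unfolding U_def by (intro mult_right_mono) auto
      also have "U \<le> 2 * (cmod (u y))\<^sup>2 + 2 * \<bar>x - y\<bar> * S"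
        unfolding U_def S_def by (rule pt_bound[OF Hu dm di])
      also have "\<bar>x - y\<bar> \<le> 2 * A" using x True by auto
      then have "2 * (cmod (u y))\<^sup>2 + 2 * \<bar>x - y\<bar> * S \<le> 2 * (cmod (u y))\<^sup>2 + 2 * (2 * A) * S"
        using S0 by (intro add_left_mono mult_right_mono) auto
      finally have "m * U \<le> g y * (2 * (cmod (u y))\<^sup>2 + 2 * (2 * A) * S)"
        using g_pos[rule_format, of y] by (simp add: mult_left_mono less_imp_le)
      then show ?thesis using True unfolding big2_def by (simp add: algebra_simps)
    next
      case False
      then show ?thesis using big20[of y] by simp
    qed
    have "(LINT y|lborel. indicator {-A..A} y * (m * U)) \<le> (LINT y|lborel. big2 y)"
      by (rule integral_mono'[OF big2i]) (use pt big20 in auto)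
    also have "(LINT y|lborel. big2 y) = 2 * G + 4 * A * S * c1"
      unfolding big2_def G_def c1_def u_def using Gi gi unfolding u_def by simp
    also have "(LINT y|lborel. indicator {-A..A} y * (m * U)) = 2 * A * (m * U)"
      using A by simp
    finally have "2 * A * (m * U) \<le> 2 * G + 4 * A * S * c1" .
    then have "U * (A * m) \<le> G + 2 * A * S * c1" by (simp add: algebra_simps)
    then have "U \<le> (G + 2 * A * S * c1) / (A * m)"
      using A m by (simp add: pos_le_divide_eq)
    also have "\<dots> = G / (A * m) + 2 * c1 * S / m"
      using A m by (simp add: field_simps)
    finally show ?thesis unfolding U_def .
  qed
  have bddA: "bdd_above ((\<lambda>x. (cmod (u x))\<^sup>2) ` {-A..A})"
    using b2 by (intro bdd_aboveI2) auto
  have aS: "a \<le> (SUP x\<in>{-A..A}. (cmod (u x))\<^sup>2)"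
    unfolding a_def by (rule cSUP_upper[OF _ bddA]) (use A in auto)
  have Sb: "(SUP x\<in>{-A..A}. (cmod (u x))\<^sup>2) \<le> G / (A * m) + 2 * c1 * S / m"
    by (rule cSUP_least) (use A b2 in auto)
  also have "\<dots> \<le> G / (A * m) + 2 * c1 * (S + T) / m"
    using T0 c10 m by (intro add_left_mono divide_right_mono mult_left_mono) auto
  finally have Sb': "(SUP x\<in>{-A..A}. (cmod (u x))\<^sup>2) \<le> G / (A * m) + 2 * c1 * (S + T) / m" .
  obtain Bv where Bv: "\<forall>x. cmod (v x) \<le> Bv" using XR_bounded[OF v] by blast
  obtain Bw where Bw: "\<forall>x. cmod (w x) \<le> Bw" using XR_bounded[OF w] by blast
  have "(cmod (u x))\<^sup>2 \<le> (Bv + Bw)\<^sup>2" for x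
  proof -
    have "cmod (u x) \<le> cmod (v x) + cmod (w x)" unfolding u_def by (rule norm_triangle_ineq4)
    also have "\<dots> \<le> Bv + Bw" using Bv Bw by (intro add_mono) auto
    finally show ?thesis by (intro power_mono) auto
  qed
  then have bddU: "bdd_above (range (\<lambda>x. (cmod (u x))\<^sup>2))"
    by (intro bdd_aboveI2) auto
  have aU: "a \<le> (SUP x. (cmod (u x))\<^sup>2)"
    unfolding a_def by (rule cSUP_upper[OF _ bddU]) auto
  have D0: "0 \<le> Delta v w" using DST S0 T0 by simp
  show ?thesis
    using D0 a0 aS G0 G1 Sb' aU c10 c20
    unfolding DST[symmetric] u_def a_def G_def by simp
qed



lemma sqrt_le_K:
  fixes X Y K :: real
  assumes "X \<le> K\<^sup>2 * Y" "K > 0" "0 \<le> Y"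
  shows "sqrt X \<le> K * sqrt Y"
proof -
  have "sqrt X \<le> sqrt (K\<^sup>2 * Y)" using assms by simp
  also have "\<dots> = K * sqrt Y" using assms by (simp add: real_sqrt_mult)
  finally show ?thesis .
qed

lemma part12:
  fixes r0 A :: real and g :: "real \<Rightarrow> real"
  assumes A: "A > 0"
    and g_cont: "continuous_on UNIV g"
    and g_pos: "\<forall>x. g x > 0"
    and g_int: "integrable lborel (\<lambda>x. (1 + \<bar>x\<bar>) * g x)"
  shows "(\<exists>K>1. \<forall>v\<in>XR r0. \<forall>w\<in>XR r0.
            dg g v w / K \<le> dX v w \<and> dX v w \<le> K * dA A v w \<and> K * dA A v w \<le> K\<^sup>2 * dg g v w)
       \<and> (\<forall>v\<in>XR r0. \<forall>w\<in>XR r0. dX v w \<le> dinf v w)"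
proof -
  obtain x0 where x0: "x0 \<in> {-A..A}" "\<forall>y\<in>{-A..A}. g x0 \<le> g y"
    using continuous_attains_inf[of "{-A..A}" g] A continuous_on_subset[OF g_cont] by force
  define m where "m = g x0"
  have m: "m > 0" "\<forall>y\<in>{-A..A}. m \<le> g y" using x0 g_pos unfolding m_def by auto
  define c1 where "c1 = (LINT x|lborel. g x)"
  define c2 where "c2 = (LINT x|lborel. \<bar>x\<bar> * g x)"
  define K where "K = 2 + 2 * c1 + 2 * c2 + 2 * c1 / m + 1 / (A * m)"
  note E = main_est[OF A g_cont g_pos g_int m, folded c1_def c2_def]
  have c: "0 \<le> c1" "0 \<le> c2" unfolding c1_def c2_def
    by (rule integral_nonneg_AE, use g_pos in \<open>auto simp: less_imp_le\<close>)+
  have Am: "0 < A * m" using A m by simp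
  have K1: "K > 1" unfolding K_def using c m Am by (simp add: add_pos_nonneg)
  have KK: "K \<le> K\<^sup>2" using K1 by (simp add: power2_eq_square)
  have Kc1: "2 * c1 \<le> K" unfolding K_def using c m Am by simp
  have Kc2: "1 + 2 * c2 \<le> K" unfolding K_def using c m Am by simp
  have Km1: "1 + 2 * c1 / m \<le> K" unfolding K_def using c m Am by simp
  have Km2: "1 / (A * m) \<le> K" unfolding K_def using c m Am by simp
  have main: "dg g v w / K \<le> dX v w \<and> dX v w \<le> K * dA A v w \<and> K * dA A v w \<le> K\<^sup>2 * dg g v w"
    if v: "v \<in> XR r0" and w: "w \<in> XR r0" for v w
  proof -
    define D where "D = Delta v w"
    define a where "a = (cmod (v 0 - w 0))\<^sup>2"
    define s where "s = (SUP x\<in>{-A..A}. (cmod (v x - w x))\<^sup>2)"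
    define G where "G = (LINT x|lborel. g x * (cmod (v x - w x))\<^sup>2)"
    have e: "0 \<le> D" "0 \<le> a" "a \<le> s" "0 \<le> G" "G \<le> 2 * c1 * a + 2 * c2 * D"
      "s \<le> G / (A * m) + 2 * c1 * D / m"
      using E[OF v w] unfolding D_def a_def s_def G_def by auto
    have dX: "dX v w = sqrt (D + a)" unfolding dX_def D_def a_def ..
    have dA: "dA A v w = sqrt (D + s)" unfolding dA_def D_def s_def ..
    have dg: "dg g v w = sqrt (D + G)" unfolding dg_def D_def G_def ..
    have i1: "D + G \<le> K\<^sup>2 * (D + a)"
    proof -
      have "D + G \<le> (1 + 2 * c2) * D + 2 * c1 * a" using e by (simp add: algebra_simps)
      also have "\<dots> \<le> K * D + K * a"
        using e Kc1 Kc2 by (intro add_mono mult_right_mono) auto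
      also have "\<dots> \<le> K\<^sup>2 * D + K\<^sup>2 * a"
        using e KK by (intro add_mono mult_right_mono) auto
      finally show ?thesis by (simp add: algebra_simps)
    qed
    have i3: "D + s \<le> K\<^sup>2 * (D + G)"
    proof -
      have "D + s \<le> (1 + 2 * c1 / m) * D + (1 / (A * m)) * G" using e by (simp add: algebra_simps)
      also have "\<dots> \<le> K * D + K * G"
        using e Km1 Km2 by (intro add_mono mult_right_mono) auto
      also have "\<dots> \<le> K\<^sup>2 * D + K\<^sup>2 * G"
        using e KK by (intro add_mono mult_right_mono) auto
      finally show ?thesis by (simp add: algebra_simps)
    qed
    have r1: "sqrt (D + G) \<le> K * sqrt (D + a)" by (rule sqrt_le_K[OF i1]) (use K1 e in auto)
    have r3: "sqrt (D + s) \<le> K * sqrt (D + G)" by (rule sqrt_le_K[OF i3]) (use K1 e in auto)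
    have "sqrt (D + a) \<le> sqrt (D + s)" using e by simp
    also have "\<dots> \<le> K * sqrt (D + s)" using K1 e by (simp add: mult_le_cancel_right1)
    finally have r2: "sqrt (D + a) \<le> K * sqrt (D + s)" .
    have "K * sqrt (D + s) \<le> K * (K * sqrt (D + G))" using r3 K1 by simp
    then have r3': "K * sqrt (D + s) \<le> K\<^sup>2 * sqrt (D + G)" by (simp add: power2_eq_square)
    have r1': "sqrt (D + G) / K \<le> sqrt (D + a)" using r1 K1 by (simp add: divide_le_eq mult.commute)
    show ?thesis unfolding dX dA dg using r1' r2 r3' by simp
  qed
  have inf: "dX v w \<le> dinf v w" if v: "v \<in> XR r0" and w: "w \<in> XR r0" for v w
    using E[OF v w] unfolding dX_def dinf_def by simp
  show ?thesis using main inf K1 by blast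
qed



lemma ae_zero_integrable:
  fixes e :: "real \<Rightarrow> real"
  assumes ei: "integrable lborel e"
    and z: "\<And>a b. a \<le> b \<Longrightarrow> (LINT x|lborel. indicator {a..b} x * e x) = 0"
  shows "AE x in lborel. e x = 0"
proof -
  have [measurable]: "e \<in> borel_measurable lborel" using ei by auto
  define p where "p x = (e x + \<bar>e x\<bar>) / 2" for x
  define q where "q x = (\<bar>e x\<bar> - e x) / 2" for x
  have [measurable]: "p \<in> borel_measurable lborel" "q \<in> borel_measurable lborel"
    unfolding p_def q_def by measurable
  have pi: "integrable lborel p" "integrable lborel q" unfolding p_def q_def using ei by auto
  have p0: "0 \<le> p x" "0 \<le> q x" for x unfolding p_def q_def by auto
  have pq: "e x = p x - q x" for x unfolding p_def q_def by (simp add: field_simps)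
  define M where "M = density lborel (\<lambda>x. ennreal (p x))"
  define N where "N = density lborel (\<lambda>x. ennreal (q x))"
  have emM: "emeasure M S = ennreal (LINT x|lborel. indicator S x * p x)" if S: "S \<in> sets borel" for S
  proof -
    have "emeasure M S = (\<integral>\<^sup>+ x. ennreal (p x) * indicator S x \<partial>lborel)"
      unfolding M_def by (rule emeasure_density) (use S in auto)
    also have "\<dots> = (\<integral>\<^sup>+ x. ennreal (indicator S x * p x) \<partial>lborel)"
      by (intro nn_integral_cong) (auto simp: indicator_def)
    also have "\<dots> = ennreal (LINT x|lborel. indicator S x * p x)"
      by (rule nn_integral_eq_integral)
         (use integrable_mult_indicator[OF _ pi(1), of S] S p0 in auto)
    finally show ?thesis .
  qed
  have emN: "emeasure N S = ennreal (LINT x|lborel. indicator S x * q x)" if S: "S \<in> sets borel" for S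
  proof -
    have "emeasure N S = (\<integral>\<^sup>+ x. ennreal (q x) * indicator S x \<partial>lborel)"
      unfolding N_def by (rule emeasure_density) (use S in auto)
    also have "\<dots> = (\<integral>\<^sup>+ x. ennreal (indicator S x * q x) \<partial>lborel)"
      by (intro nn_integral_cong) (auto simp: indicator_def)
    also have "\<dots> = ennreal (LINT x|lborel. indicator S x * q x)"
      by (rule nn_integral_eq_integral)
         (use integrable_mult_indicator[OF _ pi(2), of S] S p0 in auto)
    finally show ?thesis .
  qed
  have eqI: "(LINT x|lborel. indicator {a..b} x * p x) = (LINT x|lborel. indicator {a..b} x * q x)" for a b
  proof (cases "a \<le> b")
    case True
    have i1: "integrable lborel (\<lambda>x. indicator {a..b} x * p x)"
      using integrable_mult_indicator[OF _ pi(1), of "{a..b}"] by simp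
    have i2: "integrable lborel (\<lambda>x. indicator {a..b} x * q x)"
      using integrable_mult_indicator[OF _ pi(2), of "{a..b}"] by simp
    have "(LINT x|lborel. indicator {a..b} x * p x) - (LINT x|lborel. indicator {a..b} x * q x)
        = (LINT x|lborel. indicator {a..b} x * p x - indicator {a..b} x * q x)"
      using i1 i2 by simp
    also have "\<dots> = (LINT x|lborel. indicator {a..b} x * e x)"
      by (simp add: pq algebra_simps)
    also have "\<dots> = 0" using z True by simp
    finally show ?thesis by simp
  next
    case False
    then show ?thesis by simp
  qed
  have MN: "M = N"
  proof (rule measure_eqI_generator_eq_countable[where E="range (\<lambda>(a, b). {a..b::real})" and \<Omega>=UNIV
        and A="range (\<lambda>k::nat. {- real k..real k})"])
    show "Int_stable (range (\<lambda>(a, b). {a..b::real}))"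
    proof (rule Int_stableI)
      fix X Y assume "X \<in> range (\<lambda>(a, b). {a..b::real})" "Y \<in> range (\<lambda>(a, b). {a..b::real})"
      then obtain a b c d where "X = {a..b}" "Y = {c..d::real}" by auto
      then have "X \<inter> Y = {max a c..min b d}" by auto
      then show "X \<inter> Y \<in> range (\<lambda>(a, b). {a..b::real})" by auto
    qed
    show "range (\<lambda>(a, b). {a..b::real}) \<subseteq> Pow UNIV" by auto
    show "emeasure M X = emeasure N X" if "X \<in> range (\<lambda>(a, b). {a..b::real})" for X
      using that emM emN eqI by auto
    show "sets M = sigma_sets UNIV (range (\<lambda>(a, b). {a..b::real}))"
      unfolding M_def by (simp add: borel_eq_atLeastAtMost)
    show "sets N = sigma_sets UNIV (range (\<lambda>(a, b). {a..b::real}))"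
      unfolding N_def by (simp add: borel_eq_atLeastAtMost)
    show "range (\<lambda>k::nat. {- real k..real k}) \<subseteq> range (\<lambda>(a, b). {a..b::real})" by auto
    show "\<Union> (range (\<lambda>k::nat. {- real k..real k})) = UNIV"
    proof (safe)
      fix x :: real
      obtain k :: nat where "\<bar>x\<bar> \<le> real k" using real_arch_simple by blast
      then have "x \<in> {- real k..real k}" by auto
      then show "x \<in> \<Union> (range (\<lambda>k::nat. {- real k..real k}))" by blast
    qed auto
    show "countable (range (\<lambda>k::nat. {- real k..real k}))" by auto
    show "emeasure M X \<noteq> \<infinity>" if "X \<in> range (\<lambda>k::nat. {- real k..real k})" for X
      using that emM by auto
  qed
  have "AE x in lborel. ennreal (p x) = ennreal (q x)"
    using MN unfolding M_def N_def
    by (subst (asm) sigma_finite_measure.density_unique_iff[OF lborel.sigma_finite_measure_axioms]) auto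
  then show ?thesis
    by eventually_elim (use p0 in \<open>auto simp: pq\<close>)
qed

lemma ae_zero_local:
  fixes e :: "real \<Rightarrow> real"
  assumes si: "\<And>a b. a \<le> b \<Longrightarrow> set_integrable lborel {a..b} e"
    and z: "\<And>a b. a \<le> b \<Longrightarrow> (LINT x:{a..b}|lborel. e x) = 0"
  shows "AE x in lborel. e x = 0"
proof -
  have h: "AE x in lborel. indicator {- real n..real n} x * e x = 0" for n :: nat
  proof (rule ae_zero_integrable)
    show "integrable lborel (\<lambda>x. indicator {- real n..real n} x * e x)"
      using si[of "- real n" "real n"] unfolding set_integrable_def by simp
    fix a b :: real assume ab: "a \<le> b"
    have eq: "(\<lambda>x. indicator {a..b} x * (indicator {- real n..real n} x * e x))
       = (\<lambda>x. indicator {max a (- real n)..min b (real n)} x * e x)"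
      by (auto simp: indicator_def)
    show "(LINT x|lborel. indicator {a..b} x * (indicator {- real n..real n} x * e x)) = 0"
    proof (cases "max a (- real n) \<le> min b (real n)")
      case True
      then show ?thesis unfolding eq using z[OF True] by (simp add: set_lebesgue_integral_def)
    next
      case False
      then have "{max a (- real n)..min b (real n)} = {}" by auto
      then show ?thesis unfolding eq by simp
    qed
  qed
  have "AE x in lborel. \<forall>n::nat. indicator {- real n..real n} x * e x = 0"
    by (rule AE_all_countable[THEN iffD2]) (use h in blast)
  then show ?thesis
  proof eventually_elim
    case (elim x)
    obtain k :: nat where "\<bar>x\<bar> \<le> real k" using real_arch_simple by blast
    then show ?case using elim[rule_format, of k] by (auto simp: indicator_def split: if_splits)
  qed
qed

lemma weak_deriv_unique:
  assumes f: "has_weak_deriv v f" and h: "has_weak_deriv v h"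
  shows "AE x in lborel. f x = h x"
proof -
  define e where "e x = f x - h x" for x
  have si: "set_integrable lborel {a..b} e" and z: "(LINT x:{a..b}|lborel. e x) = 0" if "a \<le> b" for a b
  proof -
    have a: "set_integrable lborel {a..b} f" "v b - v a = (LINT x:{a..b}|lborel. f x)"
      and b: "set_integrable lborel {a..b} h" "v b - v a = (LINT x:{a..b}|lborel. h x)"
      using f h that unfolding has_weak_deriv_def by auto
    show "set_integrable lborel {a..b} e" unfolding e_def by (rule set_integral_diff(1)[OF a(1) b(1)])
    show "(LINT x:{a..b}|lborel. e x) = 0" unfolding e_def set_integral_diff(2)[OF a(1) b(1)]
      using a(2) b(2) by simp
  qed
  have "AE x in lborel. Re (e x) = 0"
  proof (rule ae_zero_local)
    fix a b :: real assume ab: "a \<le> b"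
    show "set_integrable lborel {a..b} (\<lambda>x. Re (e x))"
      using si[OF ab] unfolding set_integrable_def by (auto dest: integrable_Re)
    have "(LINT x:{a..b}|lborel. Re (e x)) = (LINT x|lborel. Re (indicator {a..b} x *\<^sub>R e x))"
      unfolding set_lebesgue_integral_def by simp
    also have "\<dots> = Re (LINT x:{a..b}|lborel. e x)"
      using si[OF ab] unfolding set_lebesgue_integral_def set_integrable_def by (rule integral_Re)
    finally have "(LINT x:{a..b}|lborel. Re (e x)) = Re (LINT x:{a..b}|lborel. e x)" .
    then show "(LINT x:{a..b}|lborel. Re (e x)) = 0" using z[OF ab] by simp
  qed
  moreover have "AE x in lborel. Im (e x) = 0"
  proof (rule ae_zero_local)
    fix a b :: real assume ab: "a \<le> b"
    show "set_integrable lborel {a..b} (\<lambda>x. Im (e x))"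
      using si[OF ab] unfolding set_integrable_def by (auto dest: integrable_Im)
    have "(LINT x:{a..b}|lborel. Im (e x)) = (LINT x|lborel. Im (indicator {a..b} x *\<^sub>R e x))"
      unfolding set_lebesgue_integral_def by simp
    also have "\<dots> = Im (LINT x:{a..b}|lborel. e x)"
      using si[OF ab] unfolding set_lebesgue_integral_def set_integrable_def by (rule integral_Im)
    finally have "(LINT x:{a..b}|lborel. Im (e x)) = Im (LINT x:{a..b}|lborel. e x)" .
    then show "(LINT x:{a..b}|lborel. Im (e x)) = 0" using z[OF ab] by simp
  qed
  ultimately show ?thesis
    by eventually_elim (simp add: e_def complex_eq_iff)
qed



lemma aff_cis:
  "((\<lambda>y. cis (\<alpha> + \<beta> * y)) has_vector_derivative (complex_of_real \<beta> * \<i> * cis (\<alpha> + \<beta> * x))) (at x)"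
proof -
  have "((\<lambda>y. \<alpha> + \<beta> * y) has_derivative (\<lambda>t. \<beta> * t)) (at x)"
    by (auto intro!: derivative_eq_intros)
  from has_derivative_cis[OF this]
  have "((\<lambda>y. cis (\<alpha> + \<beta> * y)) has_derivative (\<lambda>t. (\<beta> * t) *\<^sub>R (\<i> * cis (\<alpha> + \<beta> * x)))) (at x)" .
  moreover have "(\<lambda>t. (\<beta> * t) *\<^sub>R (\<i> * cis (\<alpha> + \<beta> * x))) = (\<lambda>t. t *\<^sub>R (complex_of_real \<beta> * \<i> * cis (\<alpha> + \<beta> * x)))"
    by (auto simp: scaleR_conv_of_real algebra_simps)
  ultimately show ?thesis unfolding has_vector_derivative_def by simp
qed

lemma chi_cont: "continuous_on S chi"
  unfolding chi_def[abs_def] by (intro continuous_intros)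

lemma chi_range: "0 \<le> chi t" "chi t \<le> 1"
  unfolding chi_def by auto

lemma chi_zero: "\<bar>t\<bar> \<ge> 1 \<Longrightarrow> chi t = 0" unfolding chi_def by auto
lemma chi_left: "-1 \<le> t \<Longrightarrow> t \<le> 0 \<Longrightarrow> chi t = 1 + t" unfolding chi_def by auto
lemma chi_right: "0 \<le> t \<Longrightarrow> t \<le> 1 \<Longrightarrow> chi t = 1 - t" unfolding chi_def by auto

definition cc :: "real \<Rightarrow> real \<Rightarrow> real" where
  "cc N x = (1 / N) * indicator {- (N^2) - N <..< - (N^2)} x - (1 / N) * indicator {- (N^2) <..< - (N^2) + N} x"

definition vd :: "real \<Rightarrow> real \<Rightarrow> complex" where
  "vd N x = complex_of_real (cc N x) * \<i> * cis (chi (N + x / N))"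

lemma region_deriv:
  assumes N: "N > 0" and x: "x \<notin> {- (N^2) - N, - (N^2), - (N^2) + N}"
  shows "((\<lambda>y. cis (chi (N + y / N))) has_vector_derivative vd N x) (at x)"
proof -
  have t: "N + y / N = (y + N^2) / N" for y using N by (simp add: field_simps power2_eq_square)
  consider "x < - (N^2)-N" | "- (N^2)-N < x \<and> x < - (N^2)" | "- (N^2) < x \<and> x < - (N^2)+N" | "- (N^2)+N < x"
    using x by force
  then show ?thesis
  proof cases
    case 1
    have eq: "cis (chi (N + y / N)) = cis (0 + 0 * y)" if "y \<in> {..< - (N^2) - N}" for y
    proof -
      have "(y + N^2) / N < -1" using that N by (simp add: divide_less_eq)
      then have "chi ((y + N^2) / N) = 0" by (intro chi_zero) linarith
      then show ?thesis unfolding t by simp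
    qed
    have "cc N x = 0" unfolding cc_def using 1 by (auto simp: indicator_def)
    then have vd: "vd N x = complex_of_real 0 * \<i> * cis (0 + 0 * x)" unfolding vd_def by simp
    show ?thesis unfolding vd
      by (rule has_vector_derivative_transform_within_open[OF aff_cis, of "{..< - (N^2) - N}"])
         (use 1 eq in auto)
  next
    case 2
    have eq: "cis (chi (N + y / N)) = cis ((1 + N) + (1/N) * y)" if "y \<in> {- (N^2) - N <..< - (N^2)}" for y
    proof -
      have "-1 < (y + N^2) / N" "(y + N^2) / N < 0" using that N
        by (simp_all add: divide_less_eq less_divide_eq)
      then have "chi (N + y / N) = 1 + (N + y / N)" unfolding t by (intro chi_left) auto
      then have "chi (N + y / N) = 1 + N + (1/N) * y" by simp
      then show ?thesis by simp
    qed
    have "cc N x = 1 / N" unfolding cc_def using 2 by (auto simp: indicator_def)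
    then have vd: "vd N x = complex_of_real (1/N) * \<i> * cis ((1 + N) + (1/N) * x)"
      unfolding vd_def using eq[of x] 2 by simp
    show ?thesis unfolding vd
      by (rule has_vector_derivative_transform_within_open[OF aff_cis, of "{- (N^2) - N <..< - (N^2)}"])
         (use 2 eq in auto)
  next
    case 3
    have eq: "cis (chi (N + y / N)) = cis ((1 - N) + (-1/N) * y)" if "y \<in> {- (N^2) <..< - (N^2) + N}" for y
    proof -
      have "0 < (y + N^2) / N" "(y + N^2) / N < 1" using that N
        by (simp_all add: divide_less_eq less_divide_eq)
      then have "chi (N + y / N) = 1 - (N + y / N)" unfolding t by (intro chi_right) auto
      then have "chi (N + y / N) = 1 - N + (-1/N) * y" by simp
      then show ?thesis by simp
    qed
    have "cc N x = - 1 / N" unfolding cc_def using 3 by (auto simp: indicator_def)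
    then have vd: "vd N x = complex_of_real (-1/N) * \<i> * cis ((1 - N) + (-1/N) * x)"
      unfolding vd_def using eq[of x] 3 by simp
    show ?thesis unfolding vd
      by (rule has_vector_derivative_transform_within_open[OF aff_cis, of "{- (N^2) <..< - (N^2) + N}"])
         (use 3 eq in auto)
  next
    case 4
    have eq: "cis (chi (N + y / N)) = cis (0 + 0 * y)" if "y \<in> {- (N^2) + N <..}" for y
    proof -
      have "1 < (y + N^2) / N" using that N by (simp add: less_divide_eq)
      then have "chi ((y + N^2) / N) = 0" by (intro chi_zero) linarith
      then show ?thesis unfolding t by simp
    qed
    have "cc N x = 0" unfolding cc_def using 4 by (auto simp: indicator_def)
    then have vd: "vd N x = complex_of_real 0 * \<i> * cis (0 + 0 * x)" unfolding vd_def by simp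
    show ?thesis unfolding vd
      by (rule has_vector_derivative_transform_within_open[OF aff_cis, of "{- (N^2) + N <..}"])
         (use 4 eq in auto)
  qed
qed



definition VV :: "real \<Rightarrow> real \<Rightarrow> complex" where
  "VV N x = cis (chi (N + x / N))"

lemma VV_cont: "continuous_on S (VV N)"
proof (cases "N = 0")
  case True
  then show ?thesis unfolding VV_def[abs_def] by simp
next
  case False
  then show ?thesis unfolding VV_def[abs_def] chi_def by (intro continuous_intros) auto
qed

lemma cc_meas[measurable]: "cc N \<in> borel_measurable borel"
  unfolding cc_def[abs_def] by measurable

lemma vd_meas[measurable]: "vd N \<in> borel_measurable borel"
proof -
  have "continuous_on UNIV (\<lambda>x. cis (chi (N + x / N)))"
    using VV_cont[of UNIV N] unfolding VV_def[abs_def] .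
  then have [measurable]: "(\<lambda>x. cis (chi (N + x / N))) \<in> borel_measurable borel"
    by (rule borel_measurable_continuous_onI)
  show ?thesis unfolding vd_def[abs_def] by measurable
qed

lemma cc_sq: "N > 0 \<Longrightarrow> (cc N x)\<^sup>2 = (1/N)\<^sup>2 * indicator {- (N^2) - N <..< - (N^2)} x + (1/N)\<^sup>2 * indicator {- (N^2) <..< - (N^2) + N} x"
  unfolding cc_def by (auto simp: indicator_def)

lemma vd_norm: "cmod (vd N x) = \<bar>cc N x\<bar>"
  unfolding vd_def by (simp add: norm_mult)

lemma cc_bound: "N > 0 \<Longrightarrow> \<bar>cc N x\<bar> \<le> 1 / N"
  unfolding cc_def by (auto simp: indicator_def)

lemma VV_weak:
  assumes N: "N > 0"
  shows "has_weak_deriv (VV N) (vd N)"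
  unfolding has_weak_deriv_def
proof (intro allI impI conjI)
  fix a b :: real assume ab: "a \<le> b"
  have ii: "integrable lborel (\<lambda>x. indicator {a..b} x * (1 / N))"
    by (rule integrable_mult_left) (simp add: integrable_indicator_iff emeasure_lborel_Icc_eq)
  show si: "set_integrable lborel {a..b} (vd N)"
    unfolding set_integrable_def
  proof (rule Bochner_Integration.integrable_bound[OF ii])
    show "(\<lambda>x. indicat_real {a..b} x *\<^sub>R vd N x) \<in> borel_measurable lborel" by measurable
    show "AE x in lborel. norm (indicat_real {a..b} x *\<^sub>R vd N x) \<le> norm (indicator {a..b} x * (1 / N))"
      using cc_bound[OF N] N by (auto simp: vd_norm indicator_def)
  qed
  have "(vd N has_integral (VV N b - VV N a)) {a..b}"
  proof (rule fundamental_theorem_of_calculus_interior_strong[of "{- (N^2) - N, - (N^2), - (N^2) + N}"])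
    show "finite {- (N^2) - N, - (N^2), - (N^2) + N}" by simp
    show "a \<le> b" by fact
    show "(VV N has_vector_derivative vd N x) (at x)" if "x \<in> {a<..<b} - {- (N^2) - N, - (N^2), - (N^2) + N}" for x
      unfolding VV_def[abs_def] by (rule region_deriv[OF N]) (use that in auto)
    show "continuous_on {a..b} (VV N)" by (rule VV_cont)
  qed
  then have "integral {a..b} (vd N) = VV N b - VV N a" by (rule integral_unique)
  then show "VV N b - VV N a = (LINT x:{a..b}|lborel. vd N x)"
    using set_borel_integral_eq_integral(2)[OF si] by simp
qed

lemma vd_sq_int:
  assumes N: "N > 0"
  shows "integrable lborel (\<lambda>x. (cmod (vd N x))\<^sup>2)"
    "(LINT x|lborel. (cmod (vd N x))\<^sup>2) = 2 / N"
proof -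
  have eq: "(\<lambda>x. (cmod (vd N x))\<^sup>2) = (\<lambda>x. (1/N)\<^sup>2 * indicator {- (N^2) - N <..< - (N^2)} x + (1/N)\<^sup>2 * indicator {- (N^2) <..< - (N^2) + N} x)"
    using cc_sq[OF N] by (simp add: vd_norm)
  have i1: "integrable lborel (indicator {- (N^2) - N <..< - (N^2)} :: real \<Rightarrow> real)"
    using N by (simp add: integrable_indicator_iff)
  have i2: "integrable lborel (indicator {- (N^2) <..< - (N^2) + N} :: real \<Rightarrow> real)"
    using N by (simp add: integrable_indicator_iff)
  show "integrable lborel (\<lambda>x. (cmod (vd N x))\<^sup>2)" unfolding eq using i1 i2 by auto
  have "(LINT x|lborel. (cmod (vd N x))\<^sup>2) = (1/N)\<^sup>2 * N + (1/N)\<^sup>2 * N"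
    unfolding eq using i1 i2 N by simp
  also have "\<dots> = 2 / N" using N by (simp add: power2_eq_square field_simps)
  finally show "(LINT x|lborel. (cmod (vd N x))\<^sup>2) = 2 / N" .
qed

lemma VV_XR: assumes N: "N > 0" shows "VV N \<in> XR 1"
proof -
  have "(\<lambda>x. ((cmod (VV N x))\<^sup>2 - 1\<^sup>2)\<^sup>2) = (\<lambda>x. 0)" by (simp add: VV_def)
  then show ?thesis unfolding XR_def mem_Collect_eq
    using VV_weak[OF N] vd_sq_int(1)[OF N] vd_meas[of N] by (intro exI[of _ "vd N"]) auto
qed

lemma const_weak: "has_weak_deriv (\<lambda>_. c) (\<lambda>_. 0)"
  unfolding has_weak_deriv_def set_integrable_def set_lebesgue_integral_def by simp

lemma const_XR: "cmod c = 1 \<Longrightarrow> (\<lambda>_. c) \<in> XR 1"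
  unfolding XR_def using const_weak[of c] by auto

lemma Delta_VV:
  assumes N: "N > 0"
  shows "Delta (VV N) (\<lambda>_. 1) = 2 / N"
proof -
  have X1: "VV N \<in> XR 1" using VV_XR[OF N] .
  have X2: "(\<lambda>_. 1) \<in> XR 1" using const_XR[of 1] by simp
  note A = wd_some[OF X1] and B = wd_some[OF X2]
  have ae1: "AE x in lborel. wderiv (VV N) x = vd N x" by (rule weak_deriv_unique[OF A(1) VV_weak[OF N]])
  have ae2: "AE x in lborel. wderiv (\<lambda>_. 1) x = 0" using weak_deriv_unique[OF B(1) const_weak] by simp
  have "(LINT x|lborel. (cmod (wderiv (VV N) x - wderiv (\<lambda>_. 1) x))\<^sup>2) = (LINT x|lborel. (cmod (vd N x))\<^sup>2)"
    by (rule integral_cong_AE) (use A(2) B(2) ae1 ae2 in \<open>auto elim: AE_mp\<close>)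
  then show ?thesis unfolding Delta_def using vd_sq_int[OF N] by (simp add: VV_def)
qed

lemma cis_sub1_sq: "(cmod (cis t - 1))\<^sup>2 = 2 - 2 * cos t"
proof -
  have "(cmod (cis t - 1))\<^sup>2 = (cos t - 1)\<^sup>2 + (sin t)\<^sup>2" by (simp add: cmod_power2)
  also have "\<dots> = ((sin t)\<^sup>2 + (cos t)\<^sup>2) - 2 * cos t + 1" by (simp add: power2_eq_square algebra_simps)
  also have "\<dots> = 2 - 2 * cos t" by simp
  finally show ?thesis .
qed

lemma sup_VV:
  assumes N: "N > 0"
  shows "(SUP x. (cmod (VV N x - 1))\<^sup>2) = (cmod (cis 1 - 1))\<^sup>2"
proof (rule antisym)
  have le: "(cmod (VV N x - 1))\<^sup>2 \<le> (cmod (cis 1 - 1))\<^sup>2" for x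
  proof -
    have "cos 1 \<le> cos (chi (N + x / N))"
      by (rule cos_monotone_0_pi_le) (use chi_range[of "N + x / N"] pi_gt3 in auto)
    then show ?thesis unfolding VV_def cis_sub1_sq by simp
  qed
  show "(SUP x. (cmod (VV N x - 1))\<^sup>2) \<le> (cmod (cis 1 - 1))\<^sup>2"
    by (rule cSUP_least) (use le in auto)
  have "VV N (- (N^2)) = cis 1"
    unfolding VV_def using N by (simp add: chi_def power2_eq_square)
  moreover have bdd: "bdd_above (range (\<lambda>x. (cmod (VV N x - 1))\<^sup>2))"
    by (rule bdd_aboveI2[of _ _ "(cmod (cis 1 - 1))\<^sup>2"]) (rule le)
  ultimately show "(cmod (cis 1 - 1))\<^sup>2 \<le> (SUP x. (cmod (VV N x - 1))\<^sup>2)"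
    using cSUP_upper[of "- (N^2)" UNIV "\<lambda>x. (cmod (VV N x - 1))\<^sup>2", OF _ bdd] by simp
qed



lemma counter:
  defines "vn \<equiv> (\<lambda>(n::nat) x. cis (chi (real n + x / real n)))"
  shows "(\<forall>n. vn n \<in> XR 1) \<and> (\<lambda>_. 1) \<in> XR 1
          \<and> (\<lambda>n. dX (vn n) (\<lambda>_. 1)) \<longlonglongrightarrow> 0
          \<and> (\<lambda>n. dinf (vn n) (\<lambda>_. 1)) \<longlonglongrightarrow> cmod (cis 1 - 1)
          \<and> cmod (cis 1 - 1) \<noteq> 0
       \<and> \<not> (\<exists>C. \<forall>v\<in>XR 1. \<forall>w\<in>XR 1. dinf v w \<le> C * dX v w)"
proof -
  have vVV: "vn n = VV (real n)" if "n \<ge> 1" for n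
    unfolding vn_def VV_def by auto
  have v0: "vn 0 = (\<lambda>_. cis 1)" unfolding vn_def by (simp add: chi_def)
  have XR: "vn n \<in> XR 1" for n
  proof (cases "n = 0")
    case True
    then show ?thesis using v0 const_XR[of "cis 1"] by simp
  next
    case False
    then show ?thesis using vVV[of n] VV_XR[of "real n"] by simp
  qed
  have X1: "(\<lambda>_. 1) \<in> XR 1" using const_XR[of 1] by simp
  define Q where "Q = (cmod (cis 1 - 1))\<^sup>2"
  have dXe: "dX (vn n) (\<lambda>_. 1) = sqrt (2 / real n)" if n: "n \<ge> 1" for n
  proof -
    have N: "real n > 0" using n by simp
    have "chi (real n) = 0" by (rule chi_zero) (use n in auto)
    then have "VV (real n) 0 = 1" unfolding VV_def by simp
    then show ?thesis unfolding dX_def vVV[OF n] Delta_VV[OF N] by simp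
  qed
  have dinfe: "dinf (vn n) (\<lambda>_. 1) = sqrt (2 / real n + Q)" if n: "n \<ge> 1" for n
  proof -
    have N: "real n > 0" using n by simp
    show ?thesis unfolding dinf_def vVV[OF n] Delta_VV[OF N] sup_VV[OF N] Q_def by simp
  qed
  have ev1: "eventually (\<lambda>n. sqrt (2 / real n) = dX (vn n) (\<lambda>_. 1)) sequentially"
    using dXe by (intro eventually_sequentiallyI[of 1]) auto
  have ev2: "eventually (\<lambda>n. sqrt (2 / real n + Q) = dinf (vn n) (\<lambda>_. 1)) sequentially"
    using dinfe by (intro eventually_sequentiallyI[of 1]) auto
  have l1: "(\<lambda>n. sqrt (2 / real n)) \<longlonglongrightarrow> 0"
    using tendsto_real_sqrt[OF lim_const_over_n[of "2::real"]] by simp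
  have L1: "(\<lambda>n. dX (vn n) (\<lambda>_. 1)) \<longlonglongrightarrow> 0"
    using l1 tendsto_cong[OF ev1] by simp
  have l2: "(\<lambda>n. sqrt (2 / real n + Q)) \<longlonglongrightarrow> sqrt (0 + Q)"
    by (intro tendsto_intros lim_const_over_n)
  have "sqrt (0 + Q) = cmod (cis 1 - 1)" unfolding Q_def by simp
  then have L2: "(\<lambda>n. dinf (vn n) (\<lambda>_. 1)) \<longlonglongrightarrow> cmod (cis 1 - 1)"
    using l2 tendsto_cong[OF ev2] by simp
  have ne: "cmod (cis 1 - 1) \<noteq> 0"
  proof
    assume "cmod (cis 1 - 1) = 0"
    then have "cis 1 = 1" by simp
    have i1: "Im (cis 1) = sin (1::real)" by simp
    have "Im (cis 1) = Im 1" using \<open>cis 1 = 1\<close> by (simp only:)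
    then have "sin (1::real) = 0" using i1 by simp
    moreover have "sin (1::real) > 0" by (rule sin_gt_zero) (use pi_gt3 in auto)
    ultimately show False by simp
  qed
  have nC: "\<not> (\<exists>C. \<forall>v\<in>XR 1. \<forall>w\<in>XR 1. dinf v w \<le> C * dX v w)"
  proof
    assume "\<exists>C. \<forall>v\<in>XR 1. \<forall>w\<in>XR 1. dinf v w \<le> C * dX v w"
    then obtain C where C: "\<forall>v\<in>XR 1. \<forall>w\<in>XR 1. dinf v w \<le> C * dX v w" by blast
    have le: "dinf (vn n) (\<lambda>_. 1) \<le> C * dX (vn n) (\<lambda>_. 1)" for n
      using C XR X1 by blast
    have "(\<lambda>n. C * dX (vn n) (\<lambda>_. 1)) \<longlonglongrightarrow> C * 0"
      by (intro tendsto_intros L1)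
    then have "cmod (cis 1 - 1) \<le> C * 0"
      by (rule LIMSEQ_le[OF L2]) (use le in auto)
    then show False using ne by simp
  qed
  show ?thesis using XR X1 L1 L2 ne nC by blast
qed

theorem propositionA2:
  fixes r0 A :: real and g :: "real \<Rightarrow> real"
  assumes r0: "r0 > 0" and A: "A > 0"
    and g_cont: "continuous_on UNIV g"
    and g_bdd: "bounded (range g)"
    and g_pos: "\<forall>x. g x > 0"
    and g_int: "integrable lborel (\<lambda>x. (1 + \<bar>x\<bar>) * g x)"
  shows "(\<exists>K>1. \<forall>v\<in>XR r0. \<forall>w\<in>XR r0.
            dg g v w / K \<le> dX v w \<and> dX v w \<le> K * dA A v w \<and> K * dA A v w \<le> K\<^sup>2 * dg g v w)
       \<and> (\<forall>v\<in>XR r0. \<forall>w\<in>XR r0. dX v w \<le> dinf v w)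
       \<and> (let vn = (\<lambda>(n::nat) x. cis (chi (real n + x / real n))) in
            (\<forall>n. vn n \<in> XR 1) \<and> (\<lambda>_. 1) \<in> XR 1
          \<and> (\<lambda>n. dX (vn n) (\<lambda>_. 1)) \<longlonglongrightarrow> 0
          \<and> (\<lambda>n. dinf (vn n) (\<lambda>_. 1)) \<longlonglongrightarrow> cmod (cis 1 - 1)
          \<and> cmod (cis 1 - 1) \<noteq> 0)
       \<and> \<not> (\<exists>C. \<forall>v\<in>XR 1. \<forall>w\<in>XR 1. dinf v w \<le> C * dX v w)"
proof -
  note P = part12[OF A g_cont g_pos g_int, of r0]
  note Q = counter
  show ?thesis using P Q unfolding Let_def by blast
qed


end
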